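(* Let $k\in[K]$ and suppose the OWA weights satisfy $v_1=\dots=v_{k-1}=0$ and $v_k>0$. Let $\hat\pi$ be an optimal solution of \textsc{Min-Quant}$(k)$~$1|prec|\max w_jT_j$, i.e. $\hat\pi\in\Pi$ minimizes the $k$th largest value among $f(\pi,S_1),\dots,f(\pi,S_K)$. Then $\mathrm{OWA}(\hat\pi)\le (1/v_k)\,\mathrm{OWA}(\pi)$ for every $\pi\in\Pi$. Moreover, the bound is tight: for every $K\ge 2$ there is an instance (with $k=1$, $v_i=1/K$ for all $i$, no precedence constraints, unit processing times and unit weights under all scenarios) and an optimal solution $\hat\pi$ of \textsc{Min-Quant}$(1)$ (= \textsc{Min-Max}) such that $\mathrm{OWA}(\hat\pi)=(1/v_1)\min_{\pi\in\Pi}\mathrm{OWA}(\pi)>0$.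
   Context: Single machine scheduling under scenarios. A set of jobs $J=\{1,\dots,n\}$ must be processed nonpreemptively on one machine, all jobs being available at time $0$; jobs may be subject to precedence constraints given by a partial order ($i\rightarrow j$ means job $j$ cannot start before job $i$ is completed). A schedule is a permutation $\pi$ of $J$ respecting the precedence constraints; $\Pi$ denotes the set of all schedules. A scenario set $\Gamma=\{S_1,\dots,S_K\}$, $K>1$, is given; under scenario $S_i$ job $j$ has a nonnegative processing time $p_j(S_i)$, nonnegative due date $d_j(S_i)$ and nonnegative weight $w_j(S_i)$. $C_j(\pi,S_i)$ is the completion time of $j$ in $\pi$ under $S_i$, i.e. the sum of $p_k(S_i)$ over $k=j$ and all jobs $k$ preceding $j$ in $\pi$. The cost of $\pi$ under $S_i$ is $f(\pi,S_i)=\max_{j\in J} w_j(S_i)[C_j(\pi,S_i)-d_j(S_i)]^+$, where $[x]^+=\max\{0,x\}$. OWA criterion: given weights $\pmb v=(v_1,\dots,v_K)$ with $v_i\in[0,1]$ and $\sum_i v_i=1$, and reals $f_1,\dots,f_K$, let $\sigma$ be a permutation of $[K]$ with $f_{\sigma(1)}\ge\dots\ge f_{\sigma(K)}$ and set $\mathrm{owa}_{\pmb v}(f_1,\dots,f_K)=\sum_{i\in[K]}v_if_{\sigma(i)}$. Set $\mathrm{OWA}(\pi)=\mathrm{owa}_{\pmb v}(f(\pi,S_1),\dots,f(\pi,S_K))$. *)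

theory Defs
  imports Complex_Main
begin

text \<open>Scenarios are indexed by 1..K; p s j, d s j, w s j are the processing time,
  due date and weight of job j under scenario s.\<close>

definition schedules :: "'a set \<Rightarrow> ('a \<times> 'a) set \<Rightarrow> 'a list set" where
  "schedules J prec = {\<pi>. distinct \<pi> \<and> set \<pi> = J \<and>
     (\<forall>a b. a < length \<pi> \<longrightarrow> b < length \<pi> \<longrightarrow> (\<pi> ! a, \<pi> ! b) \<in> prec \<longrightarrow> a < b)}"

definition compl_time :: "'a list \<Rightarrow> ('a \<Rightarrow> real) \<Rightarrow> 'a \<Rightarrow> real" where
  "compl_time \<pi> pt j = sum_list (map pt (takeWhile (\<lambda>x. x \<noteq> j) \<pi>)) + pt j"

definition cost :: "'a set \<Rightarrow> (nat \<Rightarrow> 'a \<Rightarrow> real) \<Rightarrow> (nat \<Rightarrow> 'a \<Rightarrow> real) \<Rightarrow>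
    (nat \<Rightarrow> 'a \<Rightarrow> real) \<Rightarrow> 'a list \<Rightarrow> nat \<Rightarrow> real" where
  "cost J p d w \<pi> s = Max ((\<lambda>j. w s j * max 0 (compl_time \<pi> (p s) j - d s j)) ` J)"

text \<open>Values f_1..f_K sorted nonincreasingly (as a list, position 0 = largest).\<close>
definition sorted_desc :: "nat \<Rightarrow> (nat \<Rightarrow> real) \<Rightarrow> real list" where
  "sorted_desc K f = rev (sort (map f [1..<K+1]))"

definition owa :: "nat \<Rightarrow> (nat \<Rightarrow> real) \<Rightarrow> (nat \<Rightarrow> real) \<Rightarrow> real" where
  "owa K v f = (\<Sum>i=1..K. v i * sorted_desc K f ! (i - 1))"

definition kth_largest :: "nat \<Rightarrow> nat \<Rightarrow> (nat \<Rightarrow> real) \<Rightarrow> real" where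
  "kth_largest K k f = sorted_desc K f ! (k - 1)"

definition OWA :: "nat \<Rightarrow> (nat \<Rightarrow> real) \<Rightarrow> 'a set \<Rightarrow> (nat \<Rightarrow> 'a \<Rightarrow> real) \<Rightarrow>
    (nat \<Rightarrow> 'a \<Rightarrow> real) \<Rightarrow> (nat \<Rightarrow> 'a \<Rightarrow> real) \<Rightarrow> 'a list \<Rightarrow> real" where
  "OWA K v J p d w \<pi> = owa K v (cost J p d w \<pi>)"

definition quant :: "nat \<Rightarrow> nat \<Rightarrow> 'a set \<Rightarrow> (nat \<Rightarrow> 'a \<Rightarrow> real) \<Rightarrow>
    (nat \<Rightarrow> 'a \<Rightarrow> real) \<Rightarrow> (nat \<Rightarrow> 'a \<Rightarrow> real) \<Rightarrow> 'a list \<Rightarrow> real" where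
  "quant K k J p d w \<pi> = kth_largest K k (cost J p d w \<pi>)"

definition owa_weights :: "nat \<Rightarrow> (nat \<Rightarrow> real) \<Rightarrow> bool" where
  "owa_weights K v \<longleftrightarrow> (\<forall>i\<in>{1..K}. 0 \<le> v i \<and> v i \<le> 1) \<and> (\<Sum>i=1..K. v i) = 1"

definition valid_instance :: "nat \<Rightarrow> 'a set \<Rightarrow> ('a \<times> 'a) set \<Rightarrow> (nat \<Rightarrow> 'a \<Rightarrow> real) \<Rightarrow>
    (nat \<Rightarrow> 'a \<Rightarrow> real) \<Rightarrow> (nat \<Rightarrow> 'a \<Rightarrow> real) \<Rightarrow> bool" where
  "valid_instance K J prec p d w \<longleftrightarrow> finite J \<and> J \<noteq> {} \<and> prec \<subseteq> J \<times> J \<and>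
     irrefl prec \<and> trans prec \<and>
     (\<forall>s\<in>{1..K}. \<forall>j\<in>J. 0 \<le> p s j \<and> 0 \<le> d s j \<and> 0 \<le> w s j)"

end

theory Submission
  imports Defs
begin

lemma sd_len: "length (sorted_desc K f) = K"
  by (simp add: sorted_desc_def)

lemma sd_mono:
  assumes "i \<le> j" "j < K"
  shows "sorted_desc K f ! j \<le> sorted_desc K f ! i"
proof -
  let ?s = "sort (map f [1..<K+1])"
  have l: "length ?s = K" by simp
  have "?s ! (K - Suc j) \<le> ?s ! (K - Suc i)"
    by (rule sorted_nth_mono) (use assms l in auto)
  thus ?thesis using assms l unfolding sorted_desc_def by (simp add: rev_nth)
qed

lemma sd_nonneg:
  assumes "\<forall>s\<in>{1..K}. 0 \<le> f s" "i < K"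
  shows "0 \<le> sorted_desc K f ! i"
proof -
  have "sorted_desc K f ! i \<in> set (sorted_desc K f)"
    using assms(2) by (simp add: sd_len)
  hence "sorted_desc K f ! i \<in> f ` {1..K}"
    unfolding sorted_desc_def by auto
  thus ?thesis using assms(1) by auto
qed

lemma cost_nonneg:
  assumes "valid_instance K J prec p d w" "s \<in> {1..K}"
  shows "0 \<le> cost J p d w \<pi> s"
proof -
  from assms have f: "finite J" "J \<noteq> {}" and nn: "\<forall>j\<in>J. 0 \<le> w s j"
    unfolding valid_instance_def by auto
  then obtain j where j: "j \<in> J" by auto
  have "0 \<le> w s j * max 0 (compl_time \<pi> (p s) j - d s j)"
    using nn j by simp
  thus ?thesis unfolding cost_def using f j
    by (subst Max_ge_iff) auto
qed

lemma part1:
  fixes K k :: nat and v f g :: "nat \<Rightarrow> real"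
  assumes "k \<in> {1..K}" "owa_weights K v" "\<forall>i\<in>{1..<k}. v i = 0" "0 < v k"
    and fnn: "\<forall>s\<in>{1..K}. 0 \<le> f s" and gnn: "\<forall>s\<in>{1..K}. 0 \<le> g s"
    and q: "kth_largest K k f \<le> kth_largest K k g"
  shows "owa K v f \<le> (1 / v k) * owa K v g"
proof -
  have vnn: "\<forall>i\<in>{1..K}. 0 \<le> v i" and vs: "(\<Sum>i=1..K. v i) = 1"
    using assms(2) unfolding owa_weights_def by auto
  let ?qf = "sorted_desc K f ! (k - 1)"
  let ?qg = "sorted_desc K g ! (k - 1)"
  have "owa K v f \<le> (\<Sum>i=1..K. v i * ?qf)"
    unfolding owa_def
  proof (rule sum_mono)
    fix i assume i: "i \<in> {1..K}"
    show "v i * sorted_desc K f ! (i - 1) \<le> v i * ?qf"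
    proof (cases "i < k")
      case True thus ?thesis using assms(3) i by auto
    next
      case False
      hence "sorted_desc K f ! (i - 1) \<le> ?qf"
        using i assms(1) by (intro sd_mono) auto
      thus ?thesis using vnn i by (simp add: mult_left_mono)
    qed
  qed
  also have "\<dots> = ?qf" using vs by (simp add: sum_distrib_right[symmetric])
  also have "\<dots> \<le> ?qg" using q unfolding kth_largest_def .
  also have "\<dots> = (1 / v k) * (v k * ?qg)" using assms(4) by simp
  also have "v k * ?qg \<le> owa K v g"
  proof -
    have "\<forall>i\<in>{1..K}. 0 \<le> v i * sorted_desc K g ! (i - 1)"
      using vnn sd_nonneg[OF gnn] by (auto intro!: mult_nonneg_nonneg)
    from member_le_sum[of k "{1..K}" "\<lambda>i. v i * sorted_desc K g ! (i - 1)"] this assms(1)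
    show ?thesis by (auto simp: owa_def)
  qed
  hence "(1 / v k) * (v k * ?qg) \<le> (1 / v k) * owa K v g"
    using assms(4) by (intro mult_left_mono) auto
  finally show ?thesis .
qed


lemma two_lists:
  assumes "distinct xs" "set xs = {0::nat, 1}"
  shows "xs = [0,1] \<or> xs = [1,0]"
proof -
  have "length xs = 2" using distinct_card[OF assms(1)] assms(2) by simp
  then obtain a b where xs: "xs = [a,b]"
    by (metis One_nat_def Suc_1 length_0_conv length_Suc_conv)
  have "a \<noteq> b" using assms(1) xs by simp
  moreover have "a \<in> {0,1}" "b \<in> {0,1}" using assms(2) xs by (metis list.set_intros(1) list.set_intros(2))+
  ultimately show ?thesis using xs by fastforce
qed

lemma sched01: "schedules {0::nat,1} {} = {[0,1],[1,0]}"
proof (intro equalityI subsetI)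
  fix xs assume "xs \<in> schedules {0::nat,1} {}"
  hence "distinct xs" "set xs = {0,1}" unfolding schedules_def by blast+
  thus "xs \<in> {[0,1],[1,0]}" using two_lists by blast
next
  fix xs :: "nat list" assume "xs \<in> {[0,1],[1,0]}"
  thus "xs \<in> schedules {0,1} {}" unfolding schedules_def by auto
qed

definition dd :: "nat \<Rightarrow> nat \<Rightarrow> real" where
  "dd s j = (if j = 0 then 1 else if s = 1 then 1 else 2)"

lemma cost10: "cost {0::nat,1} (\<lambda>s j. 1) dd (\<lambda>s j. 1) [1,0] = (\<lambda>s. 1)"
  by (rule ext) (simp add: cost_def compl_time_def dd_def)

lemma cost01: "cost {0::nat,1} (\<lambda>s j. 1) dd (\<lambda>s j. 1) [0,1] = (\<lambda>s. if s = 1 then 1 else 0)"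
  by (rule ext) (simp add: cost_def compl_time_def dd_def)

lemma sd_const: "sorted_desc K (\<lambda>s. 1) = replicate K 1"
  unfolding sorted_desc_def by (simp add: map_replicate_const sorted_sort_id)

lemma ins_rep: "insort (1::real) (replicate n 0) = replicate n 0 @ [1]"
  by (induction n) auto
lemma sort_ind: "sort (1 # replicate n (0::real)) = replicate n 0 @ [1]"
  using ins_rep[of n] by (simp add: sorted_sort_id)
lemma map_ind: "map (\<lambda>s. if s = 1 then 1 else 0) [2..<K+1] = replicate (K-1) (0::real)"
proof -
  have "map (\<lambda>s. if s = 1 then 1 else 0) [2..<K+1] = map (\<lambda>s. 0::real) [2..<K+1]"
    by (rule map_cong) auto
  also have "\<dots> = replicate (length [2..<K+1]) 0" by (simp only: map_replicate_const)
  also have "length [2..<K+1] = K - 1" by (simp only: length_upt)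
  finally show ?thesis .
qed

lemma sd_ind:
  assumes "1 \<le> K"
  shows "sorted_desc K (\<lambda>s. if s = 1 then 1 else 0) = 1 # replicate (K-1) (0::real)"
proof -
  have u0: "[1..<K+1] = 1 # [Suc 1..<K+1]" using assms by (intro upt_conv_Cons) simp
  have s2: "Suc 1 = 2" by simp
  have u: "[1..<K+1] = 1 # [2..<K+1]" using u0 unfolding s2 .
  have m: "map (\<lambda>s. if s = 1 then 1 else 0) [1..<K+1] = 1 # replicate (K-1) (0::real)"
    unfolding u list.map map_ind by simp
  show ?thesis unfolding sorted_desc_def m sort_ind by simp
qed

lemma owa_const:
  assumes "1 \<le> K"
  shows "owa K (\<lambda>i. 1 / real K) (\<lambda>s. 1) = 1"
proof -
  have "(\<Sum>i=1..K. 1 / real K * replicate K (1::real) ! (i - 1)) = (\<Sum>i=1..K. 1 / real K)"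
    by (rule sum.cong) auto
  thus ?thesis unfolding owa_def sd_const using assms by simp
qed

lemma owa_ind:
  assumes "1 \<le> K"
  shows "owa K (\<lambda>i. 1 / real K) (\<lambda>s. if s = 1 then 1 else 0) = 1 / real K"
proof -
  have "(\<Sum>i=1..K. 1 / real K * (1 # replicate (K-1) (0::real)) ! (i - 1))
      = (\<Sum>i=1..K. if i = 1 then 1 / real K else 0)"
    by (rule sum.cong) (auto simp: nth_Cons')
  also have "\<dots> = 1 / real K" using assms by simp
  finally show ?thesis unfolding owa_def sd_ind[OF assms] .
qed


lemma part2:
  assumes K: "2 \<le> K"
  shows "\<exists>(J::nat set) d \<pi>h.
         let v = (\<lambda>i. 1 / real K); prec = {}; p = (\<lambda>s j. 1); w = (\<lambda>s j. 1) in
         owa_weights K v \<and> valid_instance K J prec p d w \<and>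
         \<pi>h \<in> schedules J prec \<and>
         (\<forall>\<pi>\<in>schedules J prec. quant K 1 J p d w \<pi>h \<le> quant K 1 J p d w \<pi>) \<and>
         OWA K v J p d w \<pi>h = (1 / v 1) * Min (OWA K v J p d w ` schedules J prec) \<and>
         0 < (1 / v 1) * Min (OWA K v J p d w ` schedules J prec)"
proof -
  have K1: "1 \<le> K" using K by simp
  let ?v = "\<lambda>i::nat. 1 / real K"
  have ow: "owa_weights K ?v" unfolding owa_weights_def using K by auto
  have vi: "valid_instance K {0::nat,1} {} (\<lambda>s j. 1) dd (\<lambda>s j. 1)"
    unfolding valid_instance_def dd_def by (auto simp: irrefl_def trans_def)
  have q10: "quant K 1 {0::nat,1} (\<lambda>s j. 1) dd (\<lambda>s j. 1) [1,0] = 1"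
    unfolding quant_def kth_largest_def cost10 sd_const using K1 by simp
  have q01: "quant K 1 {0::nat,1} (\<lambda>s j. 1) dd (\<lambda>s j. 1) [0,1] = 1"
    unfolding quant_def kth_largest_def cost01 sd_ind[OF K1] by simp
  have o10: "OWA K ?v {0::nat,1} (\<lambda>s j. 1) dd (\<lambda>s j. 1) [1,0] = 1"
    unfolding OWA_def cost10 using owa_const[OF K1] by simp
  have o01: "OWA K ?v {0::nat,1} (\<lambda>s j. 1) dd (\<lambda>s j. 1) [0,1] = 1 / real K"
    unfolding OWA_def cost01 using owa_ind[OF K1] by simp
  have mn: "Min (OWA K ?v {0::nat,1} (\<lambda>s j. 1) dd (\<lambda>s j. 1) ` schedules {0,1} {}) = 1 / real K"
    unfolding sched01 using o10 o01 K by (simp add: min_def)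
  show ?thesis
    apply (rule exI[of _ "{0,1}"], rule exI[of _ dd], rule exI[of _ "[1,0]"])
    apply (unfold Let_def)
    apply (intro conjI)
    subgoal by (rule ow)
    subgoal by (rule vi)
    subgoal unfolding sched01 by simp
    subgoal unfolding sched01 using q10 q01 by simp
    subgoal unfolding mn o10 using K by simp
    subgoal unfolding mn using K by simp
    done
qed

theorem theorem7:
  shows
  "(\<forall>(K::nat) k v (J::'a set) prec p d w \<pi>h.
      1 < K \<longrightarrow> k \<in> {1..K} \<longrightarrow> owa_weights K v \<longrightarrow>
      (\<forall>i\<in>{1..<k}. v i = 0) \<longrightarrow> 0 < v k \<longrightarrow>
      valid_instance K J prec p d w \<longrightarrow>
      \<pi>h \<in> schedules J prec \<longrightarrow>
      (\<forall>\<pi>\<in>schedules J prec. quant K k J p d w \<pi>h \<le> quant K k J p d w \<pi>) \<longrightarrow>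
      (\<forall>\<pi>\<in>schedules J prec. OWA K v J p d w \<pi>h \<le> (1 / v k) * OWA K v J p d w \<pi>))
   \<and>
   (\<forall>K::nat. 2 \<le> K \<longrightarrow>
      (\<exists>(J::nat set) d \<pi>h.
         let v = (\<lambda>i. 1 / real K); prec = {}; p = (\<lambda>s j. 1); w = (\<lambda>s j. 1) in
         owa_weights K v \<and> valid_instance K J prec p d w \<and>
         \<pi>h \<in> schedules J prec \<and>
         (\<forall>\<pi>\<in>schedules J prec. quant K 1 J p d w \<pi>h \<le> quant K 1 J p d w \<pi>) \<and>
         OWA K v J p d w \<pi>h = (1 / v 1) * Min (OWA K v J p d w ` schedules J prec) \<and>
         0 < (1 / v 1) * Min (OWA K v J p d w ` schedules J prec)))"
proof (intro conjI allI impI ballI)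
  fix K k v and J :: "'a set" and prec p d w \<pi>h \<pi>
  assume a: "1 < K" "k \<in> {1..K}" "owa_weights K v" "\<forall>i\<in>{1..<k}. v i = 0" "0 < v k"
    "valid_instance K J prec p d w" "\<pi>h \<in> schedules J prec"
    "\<forall>\<pi>\<in>schedules J prec. quant K k J p d w \<pi>h \<le> quant K k J p d w \<pi>"
    "\<pi> \<in> schedules J prec"
  show "OWA K v J p d w \<pi>h \<le> (1 / v k) * OWA K v J p d w \<pi>"
    unfolding OWA_def
    apply (rule part1[OF a(2-5)])
    using cost_nonneg[OF a(6)] a(8,9) by (auto simp: quant_def)
next
  fix K :: nat assume "2 \<le> K"
  thus "\<exists>(J::nat set) d \<pi>h.
         let v = (\<lambda>i. 1 / real K); prec = {}; p = (\<lambda>s j. 1); w = (\<lambda>s j. 1) in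
         owa_weights K v \<and> valid_instance K J prec p d w \<and>
         \<pi>h \<in> schedules J prec \<and>
         (\<forall>\<pi>\<in>schedules J prec. quant K 1 J p d w \<pi>h \<le> quant K 1 J p d w \<pi>) \<and>
         OWA K v J p d w \<pi>h = (1 / v 1) * Min (OWA K v J p d w ` schedules J prec) \<and>
         0 < (1 / v 1) * Min (OWA K v J p d w ` schedules J prec)"
    by (rule part2)
qed

end
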